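(* Let $T\in\mathcal{C}_{P,t}$ and let $I_T=\{S\in\mathbb{C}[z]: T(S(z)b)=0\text{ for all }b\in\mathcal{A}_P\}$. Then $I_T=\{S\in\mathbb{C}[z] : S(x)F_T(x)\in\mathbb{C}[x]\}$, where the product $S(x)F_T(x)$ is computed in the ring of formal Laurent series $\mathbb{C}((x^{-1}))$. In particular, $T$ is degenerate if and only if $F_T(x)$ is (the expansion at $x=\infty$ of) a rational function of $x$; and in that case, writing $F_T=R/S$ with $R,S\in\mathbb{C}[x]$, $S$ monic and $\gcd(R,S)=1$, the polynomial $S(z)$ generates the ideal $I_T$ of $\mathbb{C}[z]$.
   Context: $P\in\mathbb{C}[x]$ is a nonconstant monic polynomial, $t\in\mathbb{C}\setminus\{0\}$. $\mathcal{A}_P$ denotes the associative unital $\mathbb{C}$-algebra generated by $u,v,z$ subject to $zu-uz=u$, $zv-vz=-v$, $uv=P(z-\tfrac12)$, $vu=P(z+\tfrac12)$; the subalgebra generated by $z$ is a polynomial ring $\mathbb{C}[z]$. $g_t$ is the automorphism with $g_t(u)=t^{-1}u$, $g_t(v)=tv$, $g_t(z)=z$. A twisted trace is a linear $T:\mathcal{A}_P\to\mathbb{C}$ with $T(ab)=T(g_t(b)a)$ for all $a,b$; $\mathcal{C}_{P,t}$ is the space of these. $T$ is degenerate if there is $0\neq a\in\mathcal{A}_P$ with $T(ab)=0$ for all $b$. The formal Stieltjes transform of $T$ is $F_T(x)=\sum_{n\ge0}T(z^n)x^{-n-1}\in x^{-1}\mathbb{C}[[x^{-1}]]$; rational functions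 vanishing at $\infty$ are identified with their expansions in $x^{-1}\mathbb{C}[[x^{-1}]]$. *)

theory Defs
  imports Complex_Main "HOL-Computational_Algebra.Polynomial" "HOL-Computational_Algebra.Formal_Laurent_Series"
begin

text \<open>We model the free
  algebra on the generators: an element is a finite formal linear combination of words,
  represented as a list of (coefficient, word) pairs (the represented element is the sum).
  A_P is the quotient of this free algebra by the two-sided ideal J generated by the
  four defining relations. A linear map on A_P is the same as a linear map on the free
  algebra vanishing on J, and a linear map on the free algebra is the same as its family
  of values on words; so a linear functional on A_P is encoded by a function on words
  whose linear extension kills J.\<close>

datatype gen = U | V | Z

type_synonym word = "gen list"
type_synonym fa = "(complex \<times> word) list"

definition fa_mult :: "fa \<Rightarrow> fa \<Rightarrow> fa" where
  "fa_mult A B = concat (map (\<lambda>(c, w). map (\<lambda>(d, w'). (c * d, w @ w')) B) A)"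

definition fa_smult :: "complex \<Rightarrow> fa \<Rightarrow> fa" where
  "fa_smult c A = map (\<lambda>(d, w). (c * d, w)) A"

definition fa_word :: "word \<Rightarrow> fa" where
  "fa_word w = [(1, w)]"

definition fa_coeff :: "fa \<Rightarrow> word \<Rightarrow> complex" where
  "fa_coeff A w = sum_list (map (\<lambda>(c, w'). if w' = w then c else 0) A)"

definition fa_poly :: "complex poly \<Rightarrow> fa" where
  "fa_poly S = map (\<lambda>i. (coeff S i, replicate i Z)) [0..<Suc (degree S)]"

definition fa_ev :: "(word \<Rightarrow> complex) \<Rightarrow> fa \<Rightarrow> complex" where
  "fa_ev T A = sum_list (map (\<lambda>(c, w). c * T w) A)"

definition rels :: "complex poly \<Rightarrow> fa list" where
  "rels P =
    [ [(1, [Z, U]), (-1, [U, Z]), (-1, [U])],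
      [(1, [Z, V]), (-1, [V, Z]), (1, [V])],
      [(1, [U, V])] @ fa_smult (-1) (fa_poly (pcompose P [:-1/2, 1:])),
      [(1, [V, U])] @ fa_smult (-1) (fa_poly (pcompose P [:1/2, 1:])) ]"

text \<open>membership in the two-sided ideal J generated by the relations
  (equality of elements of the free algebra is equality of all word coefficients)\<close>
definition in_J :: "complex poly \<Rightarrow> fa \<Rightarrow> bool" where
  "in_J P a \<longleftrightarrow> (\<exists>L :: (complex \<times> word \<times> nat \<times> word) list.
      (\<forall>(c, x, i, y) \<in> set L. i < length (rels P)) \<and>
      (\<forall>w. fa_coeff a w =
         fa_coeff (concat (map (\<lambda>(c, x, i, y).
              fa_smult c (fa_mult (fa_mult (fa_word x) (rels P ! i)) (fa_word y))) L)) w))"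

text \<open>the automorphism g_t on a word: u \<mapsto> t^-1 u, v \<mapsto> t v, z \<mapsto> z\<close>
definition g_factor :: "complex \<Rightarrow> word \<Rightarrow> complex" where
  "g_factor t w = t powi (int (count_list w V) - int (count_list w U))"

definition is_functional :: "complex poly \<Rightarrow> (word \<Rightarrow> complex) \<Rightarrow> bool" where
  "is_functional P T \<longleftrightarrow>
     (\<forall>x y. \<forall>r \<in> set (rels P). fa_ev T (fa_mult (fa_mult (fa_word x) r) (fa_word y)) = 0)"

text \<open>twisted traces: T(ab) = T(g_t(b) a); by bilinearity it suffices to check words\<close>
definition twisted_trace :: "complex poly \<Rightarrow> complex \<Rightarrow> (word \<Rightarrow> complex) \<Rightarrow> bool" where
  "twisted_trace P t T \<longleftrightarrow> is_functional P T \<and>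
     (\<forall>a b. fa_ev T (fa_mult (fa_word a) (fa_word b))
            = fa_ev T (fa_mult (fa_smult (g_factor t b) (fa_word b)) (fa_word a)))"

definition degenerate :: "complex poly \<Rightarrow> (word \<Rightarrow> complex) \<Rightarrow> bool" where
  "degenerate P T \<longleftrightarrow> (\<exists>a. \<not> in_J P a \<and> (\<forall>b. fa_ev T (fa_mult a b) = 0))"

definition I_T :: "(word \<Rightarrow> complex) \<Rightarrow> complex poly set" where
  "I_T T = {S. \<forall>b. fa_ev T (fa_mult (fa_poly S) b) = 0}"

text \<open>The ring C((x^-1)) is modelled as Laurent series in y = x^-1 (fls_X = x^-1);
  a polynomial R(x) embeds as R(fls_X_inv).\<close>
definition xpoly :: "complex poly \<Rightarrow> complex fls" where
  "xpoly R = poly (map_poly fls_const R) fls_X_inv"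

text \<open>formal Stieltjes transform F_T(x) = sum_n T(z^n) x^(-n-1)\<close>
definition stieltjes :: "(word \<Rightarrow> complex) \<Rightarrow> complex fls" where
  "stieltjes T = fls_X * fps_to_fls (Abs_fps (\<lambda>n. T (replicate n Z)))"

end

theory Submission
  imports Defs "HOL-Computational_Algebra.Polynomial_Factorial" "HOL-Computational_Algebra.Field_as_Ring"
begin


abbreviation zs :: "nat \<Rightarrow> word" where "zs n \<equiv> replicate n Z"

definition wrap :: "word \<Rightarrow> word \<Rightarrow> fa \<Rightarrow> fa" where
  "wrap x y A = map (\<lambda>(c, w). (c, x @ w @ y)) A"

definition gsum :: "complex poly \<Rightarrow> (complex \<times> word \<times> nat \<times> word) list \<Rightarrow> fa" where
  "gsum P L = concat (map (\<lambda>(c, x, i, y).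
              fa_smult c (fa_mult (fa_mult (fa_word x) (rels P ! i)) (fa_word y))) L)"

definition jeq :: "complex poly \<Rightarrow> fa \<Rightarrow> fa \<Rightarrow> bool" where
  "jeq P A B \<longleftrightarrow> in_J P (A @ fa_smult (-1) B)"

lemma fa_coeff_Nil[simp]: "fa_coeff [] w = 0" by (simp add: fa_coeff_def)
lemma fa_coeff_Cons[simp]: "fa_coeff ((c, v) # A) w = (if v = w then c else 0) + fa_coeff A w"
  by (simp add: fa_coeff_def)
lemma fa_coeff_append[simp]: "fa_coeff (A @ B) w = fa_coeff A w + fa_coeff B w"
  by (simp add: fa_coeff_def)
lemma fa_coeff_smult[simp]: "fa_coeff (fa_smult c A) w = c * fa_coeff A w"
  by (induct A) (auto simp: fa_smult_def algebra_simps)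

lemma fa_smult_Nil[simp]: "fa_smult c [] = []" by (simp add: fa_smult_def)
lemma fa_smult_Cons[simp]: "fa_smult c ((d,v)#A) = (c*d, v) # fa_smult c A" by (simp add: fa_smult_def)
lemma fa_smult_append[simp]: "fa_smult c (A @ B) = fa_smult c A @ fa_smult c B" by (simp add: fa_smult_def)
lemma fa_smult_smult[simp]: "fa_smult c (fa_smult d A) = fa_smult (c*d) A"
  by (induct A) auto

lemma wrap_Nil[simp]: "wrap x y [] = []" by (simp add: wrap_def)
lemma wrap_Cons[simp]: "wrap x y ((c,v)#A) = (c, x@v@y) # wrap x y A" by (simp add: wrap_def)
lemma wrap_append[simp]: "wrap x y (A @ B) = wrap x y A @ wrap x y B" by (simp add: wrap_def)
lemma wrap_smult[simp]: "wrap x y (fa_smult c A) = fa_smult c (wrap x y A)"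
  by (induct A) auto
lemma wrap_wrap[simp]: "wrap x y (wrap x' y' A) = wrap (x@x') (y'@y) A"
  by (induct A) auto
lemma wrap_NN[simp]: "wrap [] [] A = A" by (induct A) auto
lemma wrap_word[simp]: "wrap x y (fa_word w) = fa_word (x@w@y)"
  by (simp add: fa_word_def)

lemma fa_mult_words: "fa_mult (fa_mult (fa_word x) r) (fa_word y) = wrap x y r"
  by (induct r) (auto simp: fa_mult_def fa_word_def)

lemma fa_coeff_wrap:
  "fa_coeff (wrap x y A) w =
    (if (\<exists>v. w = x @ v @ y) then fa_coeff A (drop (length x) (take (length w - length y) w)) else 0)"
proof (induct A)
  case Nil then show ?case by simp
next
  case (Cons a A)
  obtain c v where a: "a = (c, v)" by force
  have "(x @ v @ y = w) \<longleftrightarrow> (\<exists>v. w = x @ v @ y) \<and> v = drop (length x) (take (length w - length y) w)"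
    by auto
  then show ?case using Cons by (auto simp: a)
qed

lemma fa_coeff_wrap_cong:
  assumes "\<And>w. fa_coeff A w = fa_coeff B w"
  shows "fa_coeff (wrap x y A) w = fa_coeff (wrap x y B) w"
  using assms by (simp add: fa_coeff_wrap)

lemma gsum_append[simp]: "gsum P (L1 @ L2) = gsum P L1 @ gsum P L2"
  by (simp add: gsum_def)

lemma gsum_smult: "gsum P (map (\<lambda>(d,r). (c*d,r)) L) = fa_smult c (gsum P L)"
  by (induct L) (auto simp: gsum_def fa_smult_def)

lemma fa_smult_concat: "fa_smult c (concat As) = concat (map (fa_smult c) As)"
  by (induct As) auto

lemma gsum_wrap: "gsum P (map (\<lambda>(c,x,i,y). (c, x'@x, i, y@y')) L) = wrap x' y' (gsum P L)"
  by (induct L) (auto simp: gsum_def fa_mult_words)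

lemma in_J_iff: "in_J P a \<longleftrightarrow> (\<exists>L. (\<forall>(c, x, i, y) \<in> set L. i < length (rels P)) \<and>
      (\<forall>w. fa_coeff a w = fa_coeff (gsum P L) w))"
  by (simp add: in_J_def gsum_def)

lemma in_J_cong: "in_J P A \<Longrightarrow> (\<And>w. fa_coeff A w = fa_coeff B w) \<Longrightarrow> in_J P B"
  unfolding in_J_iff by metis

lemma in_J_Nil: "in_J P []"
  unfolding in_J_iff by (rule exI[of _ "[]"]) (simp add: gsum_def)

lemma in_J_append: "in_J P A \<Longrightarrow> in_J P B \<Longrightarrow> in_J P (A @ B)"
  unfolding in_J_iff
  apply (elim exE conjE)
  subgoal for L1 L2 by (rule exI[of _ "L1 @ L2"]) auto
  done

lemma in_J_smult: "in_J P A \<Longrightarrow> in_J P (fa_smult c A)"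
  unfolding in_J_iff
  apply (elim exE conjE)
  subgoal for L by (rule exI[of _ "map (\<lambda>(d,r). (c*d,r)) L"]) (auto simp: gsum_smult)
  done

lemma in_J_wrap: "in_J P A \<Longrightarrow> in_J P (wrap x y A)"
  unfolding in_J_iff
  apply (elim exE conjE)
  subgoal for L
    apply (rule exI[of _ "map (\<lambda>(c,x0,i,y0). (c, x@x0, i, y0@y)) L"])
    apply (auto simp: gsum_wrap intro!: fa_coeff_wrap_cong)
    done
  done

lemma in_J_rel: "i < length (rels P) \<Longrightarrow> in_J P (rels P ! i)"
  unfolding in_J_iff
  apply (rule exI[of _ "[(1, [], i, [])]"])
  apply (auto simp: gsum_def fa_mult_words)
  done




lemma fa_ev_Nil[simp]: "fa_ev T [] = 0" by (simp add: fa_ev_def)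
lemma fa_ev_Cons[simp]: "fa_ev T ((c,v)#A) = c * T v + fa_ev T A" by (simp add: fa_ev_def)
lemma fa_ev_append[simp]: "fa_ev T (A @ B) = fa_ev T A + fa_ev T B" by (simp add: fa_ev_def)
lemma fa_ev_smult[simp]: "fa_ev T (fa_smult c A) = c * fa_ev T A"
  by (induct A) (auto simp: algebra_simps)
lemma fa_ev_wrap: "fa_ev T (wrap x y A) = fa_ev (\<lambda>w. T (x@w@y)) A"
  by (induct A) auto
lemma fa_ev_word[simp]: "fa_ev T (fa_word w) = T w" by (simp add: fa_word_def)

lemma fa_ev_coeff:
  assumes "finite W" "snd ` set A \<subseteq> W"
  shows "fa_ev T A = (\<Sum>w\<in>W. fa_coeff A w * T w)"
  using assms(2)
proof (induct A)
  case Nil then show ?case by simp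
next
  case (Cons a A)
  obtain c v where a: "a = (c,v)" by force
  have vW: "v \<in> W" using Cons.prems a by auto
  have "(\<Sum>w\<in>W. fa_coeff (a#A) w * T w) = (\<Sum>w\<in>W. (if v = w then c * T v else 0)) + (\<Sum>w\<in>W. fa_coeff A w * T w)"
    by (simp add: a distrib_right sum.distrib) (rule sum.cong, auto)
  also have "(\<Sum>w\<in>W. (if v = w then c * T v else 0)) = c * T v"
    using vW assms(1) by (simp add: sum.delta)
  finally show ?case using Cons a by auto
qed

lemma fa_ev_cong:
  assumes "\<And>w. fa_coeff A w = fa_coeff B w"
  shows "fa_ev T A = fa_ev T B"
proof -
  let ?W = "snd ` set A \<union> snd ` set B"
  have "fa_ev T A = (\<Sum>w\<in>?W. fa_coeff A w * T w)" by (rule fa_ev_coeff) auto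
  also have "\<dots> = (\<Sum>w\<in>?W. fa_coeff B w * T w)" using assms by simp
  also have "\<dots> = fa_ev T B" by (rule fa_ev_coeff[symmetric]) auto
  finally show ?thesis .
qed

lemma in_J_ev:
  assumes F: "is_functional P T" and J: "in_J P a"
  shows "fa_ev T a = 0"
proof -
  obtain L where L: "\<forall>(c, x, i, y) \<in> set L. i < length (rels P)"
    and C: "\<forall>w. fa_coeff a w = fa_coeff (gsum P L) w"
    using J unfolding in_J_iff by blast
  have "fa_ev T (gsum P L) = 0" using L
  proof (induct L)
    case Nil then show ?case by (simp add: gsum_def)
  next
    case (Cons l L)
    obtain c x i y where l: "l = (c,x,i,y)" by (cases l) auto
    have i: "i < length (rels P)" using Cons.prems l by auto
    have "fa_ev T (fa_mult (fa_mult (fa_word x) (rels P ! i)) (fa_word y)) = 0"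
      using F i unfolding is_functional_def by auto
    then show ?case using Cons l by (auto simp: gsum_def)
  qed
  then show ?thesis using fa_ev_cong[of a "gsum P L" T] C by simp
qed

lemma jeq_coeff: "(\<And>w. fa_coeff A w = fa_coeff B w) \<Longrightarrow> jeq P A B"
  unfolding jeq_def by (rule in_J_cong[OF in_J_Nil]) simp

lemma jeq_refl: "jeq P A A" by (rule jeq_coeff) simp

lemma jeq_sym: "jeq P A B \<Longrightarrow> jeq P B A"
  unfolding jeq_def by (drule in_J_smult[where c="-1"]) (erule in_J_cong, simp)

lemma jeq_trans: "jeq P A B \<Longrightarrow> jeq P B C \<Longrightarrow> jeq P A C"
  unfolding jeq_def by (drule (1) in_J_append) (erule in_J_cong, simp)

lemma jeq_append: "jeq P A B \<Longrightarrow> jeq P A' B' \<Longrightarrow> jeq P (A @ A') (B @ B')"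
  unfolding jeq_def by (drule (1) in_J_append) (erule in_J_cong, simp)

lemma jeq_smult: "jeq P A B \<Longrightarrow> jeq P (fa_smult c A) (fa_smult c B)"
  unfolding jeq_def by (drule in_J_smult[where c=c]) (erule in_J_cong, simp add: algebra_simps)

lemma jeq_wrap: "jeq P A B \<Longrightarrow> jeq P (wrap x y A) (wrap x y B)"
  unfolding jeq_def by (drule in_J_wrap[where x=x and y=y]) simp

lemma jeq_in_J: "jeq P A B \<Longrightarrow> in_J P B \<Longrightarrow> in_J P A"
  unfolding jeq_def by (drule (1) in_J_append) (erule in_J_cong, simp)

lemma jeq_ev: "is_functional P T \<Longrightarrow> jeq P A B \<Longrightarrow> fa_ev T A = fa_ev T B"
  unfolding jeq_def by (drule (1) in_J_ev) simp

lemma jeq_Cons: "jeq P [(c,v)] B \<Longrightarrow> jeq P A A' \<Longrightarrow> jeq P ((c,v)#A) (B @ A')"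
  using jeq_append[of P "[(c,v)]" B A A'] by simp

definition Pm :: "complex poly \<Rightarrow> complex poly" where "Pm P = pcompose P [:-1/2, 1:]"
definition Pp :: "complex poly \<Rightarrow> complex poly" where "Pp P = pcompose P [:1/2, 1:]"

lemma rel_UZ: "jeq P [(1,[U,Z])] [(1,[Z,U]),(-1,[U])]"
proof -
  have "in_J P (rels P ! 0)" by (rule in_J_rel) (simp add: rels_def)
  then have "in_J P (fa_smult (-1) (rels P ! 0))" by (rule in_J_smult)
  then show ?thesis unfolding jeq_def by (rule in_J_cong) (simp add: rels_def)
qed

lemma rel_VZ: "jeq P [(1,[V,Z])] [(1,[Z,V]),(1,[V])]"
proof -
  have "in_J P (rels P ! 1)" by (rule in_J_rel) (simp add: rels_def)
  then have "in_J P (fa_smult (-1) (rels P ! 1))" by (rule in_J_smult)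
  then show ?thesis unfolding jeq_def by (rule in_J_cong) (simp add: rels_def)
qed

lemma rel_UV: "jeq P [(1,[U,V])] (fa_poly (Pm P))"
proof -
  have "in_J P (rels P ! 2)" by (rule in_J_rel) (simp add: rels_def)
  then show ?thesis unfolding jeq_def by (rule in_J_cong) (simp add: rels_def Pm_def)
qed

lemma rel_VU: "jeq P [(1,[V,U])] (fa_poly (Pp P))"
proof -
  have "in_J P (rels P ! 3)" by (rule in_J_rel) (simp add: rels_def)
  then show ?thesis unfolding jeq_def by (rule in_J_cong) (simp add: rels_def Pp_def)
qed




definition wt :: "word \<Rightarrow> int" where
  "wt w = int (count_list w U) - int (count_list w V)"
definition ncnt :: "word \<Rightarrow> nat" where
  "ncnt w = length (filter (\<lambda>g. g \<noteq> Z) w)"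
definition NF :: "word \<Rightarrow> bool" where
  "NF w \<longleftrightarrow> (\<exists>i k. w = zs i @ replicate k U) \<or> (\<exists>i k. w = zs i @ replicate k V)"

lemma count_list_rep[simp]: "count_list (replicate n a) b = (if a = b then n else 0)"
  by (induct n) auto

lemma wt_simps[simp]: "wt [] = 0" "wt (a # w) = wt w + (if a = U then 1 else if a = V then -1 else 0)"
  "wt (x @ y) = wt x + wt y" "wt (replicate n Z) = 0" "wt (replicate n U) = int n" "wt (replicate n V) = - int n"
  by (auto simp: wt_def)

lemma ncnt_simps[simp]: "ncnt [] = 0" "ncnt (a # w) = (if a = Z then ncnt w else Suc (ncnt w))"
  "ncnt (x @ y) = ncnt x + ncnt y" "ncnt (replicate n Z) = 0"
  by (auto simp: ncnt_def)

lemma combine: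
  assumes "\<forall>p\<in>set A. \<exists>B. jeq P (fa_word (snd p)) B \<and> (\<forall>q\<in>set B. G (snd q))"
  shows "\<exists>B. jeq P A B \<and> (\<forall>q\<in>set B. G (snd q))"
  using assms
proof (induct A)
  case Nil then show ?case by (intro exI[of _ "[]"]) (simp add: jeq_refl)
next
  case (Cons a A)
  obtain c v where a: "a = (c,v)" by force
  obtain B1 where B1: "jeq P (fa_word v) B1" "\<forall>q\<in>set B1. G (snd q)" using Cons.prems a by auto
  obtain B2 where B2: "jeq P A B2" "\<forall>q\<in>set B2. G (snd q)" using Cons by auto
  have "jeq P [(c,v)] (fa_smult c (fa_word v))" by (rule jeq_coeff) (simp add: fa_word_def)
  moreover have "jeq P (fa_smult c (fa_word v)) (fa_smult c B1)" by (rule jeq_smult[OF B1(1)])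
  ultimately have "jeq P [(c,v)] (fa_smult c B1)" by (rule jeq_trans)
  then have "jeq P (a#A) (fa_smult c B1 @ B2)" unfolding a by (rule jeq_Cons[OF _ B2(1)])
  moreover have "\<forall>q\<in>set (fa_smult c B1 @ B2). G (snd q)" using B1(2) B2(2)
    by (auto simp: fa_smult_def)
  ultimately show ?case by blast
qed

lemma snd_set_wrap: "q \<in> set (wrap x y B) \<Longrightarrow> \<exists>p\<in>set B. snd q = x @ snd p @ y"
  by (force simp: wrap_def)

lemma snd_set_fa_poly: "q \<in> set (fa_poly Q) \<Longrightarrow> \<exists>i. snd q = zs i"
  by (auto simp: fa_poly_def)

lemma rep_Z:
  assumes rel: "jeq P [(1,[c,Z])] [(1,[Z,c]),(-s,[c])]"
  shows "jeq P (fa_word (replicate k c @ [Z])) [(1, Z # replicate k c), (- s * of_nat k, replicate k c)]"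
proof (induct k)
  case 0 then show ?case by (intro jeq_coeff) (simp add: fa_word_def)
next
  case (Suc k)
  have "jeq P (wrap [c] [] (fa_word (replicate k c @ [Z])))
          (wrap [c] [] [(1, Z # replicate k c), (- s * of_nat k, replicate k c)])"
    by (rule jeq_wrap[OF Suc])
  then have e1: "jeq P (fa_word (replicate (Suc k) c @ [Z])) ([(1, [c, Z] @ replicate k c)] @ [(- s * of_nat k, c # replicate k c)])"
    by simp
  have "jeq P (wrap [] (replicate k c) [(1,[c,Z])]) (wrap [] (replicate k c) [(1,[Z,c]),(-s,[c])])"
    by (rule jeq_wrap[OF rel])
  then have e2: "jeq P [(1, [c, Z] @ replicate k c)] [(1, Z # c # replicate k c), (-s, c # replicate k c)]"
    by simp
  have "jeq P ([(1, [c, Z] @ replicate k c)] @ [(- s * of_nat k, c # replicate k c)])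
     ([(1, Z # c # replicate k c), (-s, c # replicate k c)] @ [(- s * of_nat k, c # replicate k c)])"
    by (rule jeq_append[OF e2 jeq_refl])
  moreover have "jeq P ([(1, Z # c # replicate k c), (-s, c # replicate k c)] @ [(- s * of_nat k, c # replicate k c)])
     [(1, Z # replicate (Suc k) c), (- s * of_nat (Suc k), replicate (Suc k) c)]"
    by (rule jeq_coeff) (simp add: algebra_simps)
  ultimately show ?case using e1 jeq_trans by blast
qed

lemma pure:
  assumes rel: "jeq P [(1,[c,Z])] [(1,[Z,c]),(-s,[c])]" and cZ: "c \<noteq> Z"
  shows "set w \<subseteq> {Z, c} \<Longrightarrow> \<exists>B. jeq P (fa_word w) B \<and> (\<forall>q\<in>set B. \<exists>i. snd q = zs i @ replicate (count_list w c) c)"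
proof (induct w rule: rev_induct)
  case Nil then show ?case by (intro exI[of _ "fa_word []"]) (auto simp: jeq_refl fa_word_def)
next
  case (snoc g w)
  then obtain B where B: "jeq P (fa_word w) B" "\<forall>q\<in>set B. \<exists>i. snd q = zs i @ replicate (count_list w c) c"
    by auto
  have W: "jeq P (fa_word (w @ [g])) (wrap [] [g] B)"
    using jeq_wrap[OF B(1), of "[]" "[g]"] by simp
  show ?case
  proof (cases "g = Z")
    case True
    let ?k = "count_list w c"
    have "\<exists>B'. jeq P (wrap [] [g] B) B' \<and> (\<forall>q\<in>set B'. \<exists>i. snd q = zs i @ replicate ?k c)"
    proof (rule combine, intro ballI)
      fix p assume "p \<in> set (wrap [] [g] B)"
      then obtain i where i: "snd p = zs i @ replicate ?k c @ [Z]" using B(2) True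
        by (auto simp: wrap_def)
      have "jeq P (wrap (zs i) [] (fa_word (replicate ?k c @ [Z])))
           (wrap (zs i) [] [(1, Z # replicate ?k c), (- s * of_nat ?k, replicate ?k c)])"
        by (rule jeq_wrap[OF rep_Z[OF rel]])
      then have "jeq P (fa_word (snd p)) [(1, zs (Suc i) @ replicate ?k c), (- s * of_nat ?k, zs i @ replicate ?k c)]"
        by (simp add: i replicate_app_Cons_same)
      moreover have "\<exists>i'. Z # zs i @ replicate ?k c = zs i' @ replicate ?k c" by (metis replicate_Suc append_Cons)
      ultimately show "\<exists>B. jeq P (fa_word (snd p)) B \<and> (\<forall>q\<in>set B. \<exists>i. snd q = zs i @ replicate ?k c)"
        by (intro exI[of _ "[(1, zs (Suc i) @ replicate ?k c), (- s * of_nat ?k, zs i @ replicate ?k c)]"]) auto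
    qed
    then obtain B' where B': "jeq P (wrap [] [g] B) B'" "\<forall>q\<in>set B'. \<exists>i. snd q = zs i @ replicate ?k c"
      by blast
    have "count_list (w @ [g]) c = ?k" using True cZ by simp
    then show ?thesis using jeq_trans[OF W B'(1)] B'(2) by auto
  next
    case False
    then have g: "g = c" using snoc.prems by auto
    have "\<forall>q\<in>set (wrap [] [g] B). \<exists>i. snd q = zs i @ replicate (count_list (w @ [g]) c) c"
      using B(2) g by (auto simp: wrap_def replicate_append_same)
    then show ?thesis using W by blast
  qed
qed

lemma first_V: "V \<in> set w \<Longrightarrow> U \<notin> set w \<Longrightarrow> \<exists>m y. w = zs m @ V # y"
proof (induct w)
  case Nil then show ?case by simp
next
  case (Cons a w)
  show ?case
  proof (cases a)
    case Z
    then obtain m y where "w = zs m @ V # y" using Cons by auto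
    then show ?thesis using Z by (intro exI[of _ "Suc m"] exI[of _ y]) simp
  qed (use Cons in \<open>auto intro: exI[of _ 0]\<close>)
qed

lemma first_U: "U \<in> set w \<Longrightarrow> V \<notin> set w \<Longrightarrow> \<exists>m y. w = zs m @ U # y"
proof (induct w)
  case Nil then show ?case by simp
next
  case (Cons a w)
  show ?case
  proof (cases a)
    case Z
    then obtain m y where "w = zs m @ U # y" using Cons by auto
    then show ?thesis using Z by (intro exI[of _ "Suc m"] exI[of _ y]) simp
  qed (use Cons in \<open>auto intro: exI[of _ 0]\<close>)
qed

lemma pattern: "U \<in> set w \<Longrightarrow> V \<in> set w \<Longrightarrow>
   \<exists>x m y. w = x @ U # zs m @ V # y \<or> w = x @ V # zs m @ U # y"
proof (induct w)
  case Nil then show ?case by simp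
next
  case (Cons a w)
  show ?case
  proof (cases "U \<in> set w \<and> V \<in> set w")
    case True
    then obtain x m y where "w = x @ U # zs m @ V # y \<or> w = x @ V # zs m @ U # y" using Cons by blast
    then show ?thesis by (intro exI[of _ "a # x"] exI[of _ m] exI[of _ y]) auto
  next
    case False
    show ?thesis
    proof (cases a)
      case Z then show ?thesis using Cons False by auto
    next
      case U
      then have "V \<in> set w" "U \<notin> set w" using Cons.prems False by auto
      then obtain m y where "w = zs m @ V # y" using first_V by blast
      then show ?thesis using U by (intro exI[of _ "[]"] exI[of _ m] exI[of _ y]) auto
    next
      case V
      then have "U \<in> set w" "V \<notin> set w" using Cons.prems False by auto
      then obtain m y where "w = zs m @ U # y" using first_U by blast
      then show ?thesis using V by (intro exI[of _ "[]"] exI[of _ m] exI[of _ y]) auto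
    qed
  qed
qed

definition good :: "int \<Rightarrow> fa \<Rightarrow> bool" where
  "good W B \<longleftrightarrow> (\<forall>q\<in>set B. NF (snd q) \<and> wt (snd q) = W)"

lemma mixed:
  assumes relZ: "jeq P [(1,[a,Z])] [(1,[Z,a]),(-s,[a])]"
    and relab: "jeq P [(1,[a,b])] (fa_poly Q)"
    and ab: "a \<noteq> Z" "b \<noteq> Z" "wt [a,b] = 0"
    and IH: "\<And>w'. ncnt w' < n \<Longrightarrow> \<exists>B. jeq P (fa_word w') B \<and> good (wt w') B"
  shows "ncnt (x @ a # zs m @ b # y) = n \<Longrightarrow>
     \<exists>B. jeq P (fa_word (x @ a # zs m @ b # y)) B \<and> good (wt (x @ a # zs m @ b # y)) B"
proof (induct m arbitrary: x)
  case 0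
  have e: "jeq P (fa_word (x @ a # zs 0 @ b # y)) (wrap x y (fa_poly Q))"
    using jeq_wrap[OF relab, of x y] by (simp add: fa_word_def)
  have "\<exists>B. jeq P (wrap x y (fa_poly Q)) B \<and> (\<forall>q\<in>set B. NF (snd q) \<and> wt (snd q) = wt (x @ a # zs 0 @ b # y))"
  proof (rule combine, intro ballI)
    fix p assume "p \<in> set (wrap x y (fa_poly Q))"
    then obtain i where i: "snd p = x @ zs i @ y" by (auto simp: wrap_def fa_poly_def)
    have "ncnt (x @ a # zs 0 @ b # y) = ncnt x + ncnt y + 2"
      using ab by simp
    then have "ncnt (snd p) < n" using 0 i by simp
    then obtain B where "jeq P (fa_word (snd p)) B" "good (wt (snd p)) B" using IH by blast
    moreover have "wt (snd p) = wt (x @ a # zs 0 @ b # y)"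
    proof -
      have "wt (x @ a # zs 0 @ b # y) = wt x + wt [a,b] + wt y" by simp
      then show ?thesis using ab(3) i by simp
    qed
    ultimately show "\<exists>B. jeq P (fa_word (snd p)) B \<and> (\<forall>q\<in>set B. NF (snd q) \<and> wt (snd q) = wt (x @ a # zs 0 @ b # y))"
      unfolding good_def by metis
  qed
  then show ?case using e jeq_trans unfolding good_def by blast
next
  case (Suc m)
  have e0: "jeq P (wrap x (zs m @ b # y) [(1,[a,Z])]) (wrap x (zs m @ b # y) [(1,[Z,a]),(-s,[a])])"
    by (rule jeq_wrap[OF relZ])
  have e: "jeq P (fa_word (x @ a # zs (Suc m) @ b # y))
      [(1, (x @ [Z]) @ a # zs m @ b # y), (-s, x @ a # zs m @ b # y)]"
    using e0 by (simp add: fa_word_def)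
  have n1: "ncnt ((x @ [Z]) @ a # zs m @ b # y) = n" "ncnt (x @ a # zs m @ b # y) = n"
    using Suc.prems ab by simp_all
  obtain B1 where B1: "jeq P (fa_word ((x @ [Z]) @ a # zs m @ b # y)) B1" "good (wt ((x @ [Z]) @ a # zs m @ b # y)) B1"
    using Suc.hyps[OF n1(1)] by blast
  obtain B2 where B2: "jeq P (fa_word (x @ a # zs m @ b # y)) B2" "good (wt (x @ a # zs m @ b # y)) B2"
    using Suc.hyps[OF n1(2)] by blast
  have "jeq P [(1, (x @ [Z]) @ a # zs m @ b # y), (-s, x @ a # zs m @ b # y)] (fa_smult 1 B1 @ (fa_smult (-s) B2 @ []))"
    apply (rule jeq_Cons)
     apply (rule jeq_trans[OF _ jeq_smult[OF B1(1)]], rule jeq_coeff, simp add: fa_word_def)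
    apply (rule jeq_Cons[OF _ jeq_refl])
    apply (rule jeq_trans[OF _ jeq_smult[OF B2(1)]], rule jeq_coeff, simp add: fa_word_def)
    done
  moreover have "good (wt (x @ a # zs (Suc m) @ b # y)) (fa_smult 1 B1 @ (fa_smult (-s) B2 @ []))"
    using B1(2) B2(2) by (auto simp: good_def fa_smult_def)
  ultimately show ?case using e jeq_trans by blast
qed

lemma NF_thm: "\<exists>B. jeq P (fa_word w) B \<and> good (wt w) B"
proof (induct "ncnt w" arbitrary: w rule: less_induct)
  case less
  show ?case
  proof (cases "U \<in> set w \<and> V \<in> set w")
    case True
    then obtain x m y where "w = x @ U # zs m @ V # y \<or> w = x @ V # zs m @ U # y" using pattern by blast
    then show ?thesis
    proof
      assume w: "w = x @ U # zs m @ V # y"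
      show ?thesis unfolding w
        by (rule mixed[OF rel_UZ rel_UV _ _ _ less]) (simp_all add: w)
    next
      assume w: "w = x @ V # zs m @ U # y"
      have rel: "jeq P [(1,[V,Z])] [(1,[Z,V]),(-(-1),[V])]" using rel_VZ by simp
      show ?thesis unfolding w
        by (rule mixed[OF rel rel_VU _ _ _ less]) (simp_all add: w)
    qed
  next
    case False
    show ?thesis
    proof (cases "V \<in> set w")
      case True
      have "set w \<subseteq> {Z, V}"
      proof
        fix g assume "g \<in> set w" then show "g \<in> {Z, V}" using False True gen.exhaust[of g] by auto
      qed
      then obtain B where B: "jeq P (fa_word w) B" "\<forall>q\<in>set B. \<exists>i. snd q = zs i @ replicate (count_list w V) V"
        using pure[OF _ , of P V "-1" w] rel_VZ by auto
      have "count_list w U = 0" using False True by (simp add: count_list_0_iff)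
      then have "good (wt w) B" using B(2) by (auto simp: good_def NF_def wt_def)
      then show ?thesis using B by blast
    next
      case False
      have "set w \<subseteq> {Z, U}"
      proof
        fix g assume "g \<in> set w" then show "g \<in> {Z, U}" using False gen.exhaust[of g] by auto
      qed
      then obtain B where B: "jeq P (fa_word w) B" "\<forall>q\<in>set B. \<exists>i. snd q = zs i @ replicate (count_list w U) U"
        using pure[OF rel_UZ[of P] _ \<open>set w \<subseteq> {Z, U}\<close>] by auto
      have "count_list w V = 0" using False by (simp add: count_list_0_iff)
      then have "good (wt w) B" using B(2) by (fastforce simp: good_def NF_def wt_def)
      then show ?thesis using B by blast
    qed
  qed
qed




lemma fa_coeff_upt: "fa_coeff (map (\<lambda>i. (f i, zs i)) [0..<n]) w =
   (if w = zs (length w) \<and> length w < n then f (length w) else 0)"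
proof (induct n)
  case 0 then show ?case by simp
next
  case (Suc n)
  have "fa_coeff (map (\<lambda>i. (f i, zs i)) [0..<Suc n]) w = fa_coeff (map (\<lambda>i. (f i, zs i)) [0..<n]) w + (if zs n = w then f n else 0)"
    by (simp add: fa_coeff_def)
  then show ?case using Suc by (cases "w = zs n") (auto simp: less_Suc_eq)
qed

lemma fa_coeff_fa_poly: "fa_coeff (fa_poly Q) w = (if w = zs (length w) then coeff Q (length w) else 0)"
  unfolding fa_poly_def fa_coeff_upt by (auto simp: coeff_eq_0)

definition polyof :: "fa \<Rightarrow> complex poly" where
  "polyof B = sum_list (map (\<lambda>(c,v). monom c (length v)) B)"

lemma polyof_coeff:
  assumes "\<forall>q\<in>set B. snd q = zs (length (snd q))"
  shows "fa_coeff B w = fa_coeff (fa_poly (polyof B)) w"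
  using assms
proof (induct B)
  case Nil then show ?case by (simp add: fa_coeff_fa_poly polyof_def)
next
  case (Cons a B)
  obtain c v where a: "a = (c,v)" by force
  have v: "v = zs (length v)" using Cons.prems a by auto
  have "fa_coeff (fa_poly (polyof (a#B))) w = fa_coeff (fa_poly (monom c (length v))) w + fa_coeff (fa_poly (polyof B)) w"
    by (simp add: fa_coeff_fa_poly polyof_def a coeff_add)
  also have "fa_coeff (fa_poly (monom c (length v))) w = (if v = w then c else 0)"
    using v by (auto simp: fa_coeff_fa_poly coeff_monom)
  finally show ?case using Cons a by simp
qed

lemma wt0_poly: "wt w = 0 \<Longrightarrow> \<exists>Q. jeq P (fa_word w) (fa_poly Q)"
proof -
  assume w: "wt w = 0"
  obtain B where B: "jeq P (fa_word w) B" "good (wt w) B" using NF_thm by blast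
  have "\<forall>q\<in>set B. snd q = zs (length (snd q))"
  proof
    fix q assume "q \<in> set B"
    then have "NF (snd q)" "wt (snd q) = 0" using B(2) w by (auto simp: good_def)
    then show "snd q = zs (length (snd q))" by (auto simp: NF_def)
  qed
  then have "jeq P B (fa_poly (polyof B))" by (intro jeq_coeff polyof_coeff)
  then show ?thesis using B(1) jeq_trans by blast
qed

lemma fa_ev_wrap_map: "fa_ev T (wrap x y (map (\<lambda>i. (f i, zs i)) L)) = sum_list (map (\<lambda>i. f i * T (x @ zs i @ y)) L)"
  by (induct L) auto

definition lin :: "(word \<Rightarrow> complex) \<Rightarrow> complex poly \<Rightarrow> word \<Rightarrow> word \<Rightarrow> complex" where
  "lin T Q x y = fa_ev T (wrap x y (fa_poly Q))"

lemma lin_sum: "lin T Q x y = (\<Sum>i\<le>degree Q. coeff Q i * T (x @ zs i @ y))"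
proof -
  have "lin T Q x y = sum_list (map (\<lambda>i. coeff Q i * T (x @ zs i @ y)) [0..<Suc (degree Q)])"
    unfolding lin_def fa_poly_def by (rule fa_ev_wrap_map)
  also have "\<dots> = (\<Sum>i\<le>degree Q. coeff Q i * T (x @ zs i @ y))"
    by (simp add: interv_sum_list_conv_sum_set_nat atLeast0LessThan lessThan_Suc_atMost del: upt_Suc)
  finally show ?thesis .
qed

lemma trace_Z:
  assumes "twisted_trace P t T" shows "T (w @ [Z]) = T (Z # w)"
proof -
  have "fa_ev T (fa_mult (fa_word w) (fa_word [Z]))
            = fa_ev T (fa_mult (fa_smult (g_factor t [Z]) (fa_word [Z])) (fa_word w))"
    using assms unfolding twisted_trace_def by blast
  then show ?thesis by (simp add: fa_mult_def fa_word_def g_factor_def)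
qed

lemma Zcomm:
  assumes F: "is_functional P T"
  shows "T (x @ Z # w) = T (x @ w @ [Z]) + of_int (wt w) * T (x @ w)"
proof (induct w arbitrary: x)
  case Nil then show ?case by simp
next
  case (Cons a w)
  show ?case
  proof (cases a)
    case U
    have "fa_ev T (wrap x w [(1,[U,Z])]) = fa_ev T (wrap x w [(1,[Z,U]),(-1,[U])])"
      by (rule jeq_ev[OF F jeq_wrap[OF rel_UZ]])
    then have e: "T (x @ U # Z # w) = T (x @ Z # U # w) - T (x @ U # w)" by simp
    have "T ((x @ [U]) @ Z # w) = T ((x @ [U]) @ w @ [Z]) + of_int (wt w) * T ((x @ [U]) @ w)"
      by (rule Cons)
    then show ?thesis using e U by (simp add: algebra_simps)
  next
    case V
    have "fa_ev T (wrap x w [(1,[V,Z])]) = fa_ev T (wrap x w [(1,[Z,V]),(1,[V])])"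
      by (rule jeq_ev[OF F jeq_wrap[OF rel_VZ]])
    then have e: "T (x @ V # Z # w) = T (x @ Z # V # w) + T (x @ V # w)" by simp
    have "T ((x @ [V]) @ Z # w) = T ((x @ [V]) @ w @ [Z]) + of_int (wt w) * T ((x @ [V]) @ w)"
      by (rule Cons)
    then show ?thesis using e V by (simp add: algebra_simps)
  next
    case Z
    have "T ((x @ [Z]) @ Z # w) = T ((x @ [Z]) @ w @ [Z]) + of_int (wt w) * T ((x @ [Z]) @ w)"
      by (rule Cons)
    then show ?thesis using Z by simp
  qed
qed

lemma wt_vanish:
  assumes "twisted_trace P t T" "wt w \<noteq> 0"
  shows "T w = 0"
proof -
  have F: "is_functional P T" using assms(1) by (simp add: twisted_trace_def)
  have "T ([] @ Z # w) = T ([] @ w @ [Z]) + of_int (wt w) * T ([] @ w)" by (rule Zcomm[OF F])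
  then have "of_int (wt w) * T w = 0" using trace_Z[OF assms(1), of w] by simp
  then show ?thesis using assms(2) by simp
qed

lemma fa_ev_mult: "fa_ev T (fa_mult A B) = (\<Sum>(d,w)\<leftarrow>B. d * fa_ev T (wrap [] w A))"
proof (induct A)
  case Nil then show ?case by (simp add: fa_mult_def)
next
  case (Cons a A)
  obtain c v where a: "a = (c,v)" by force
  have "fa_ev T (fa_mult (a#A) B) = (\<Sum>x\<leftarrow>B. c * fst x * T (v @ snd x)) + fa_ev T (fa_mult A B)"
    by (simp add: fa_mult_def a fa_ev_def o_def case_prod_beta)
  also have "\<dots> = (\<Sum>(d,w)\<leftarrow>B. d * fa_ev T (wrap [] w (a#A)))"
    unfolding Cons a by (simp add: sum_list_addf[symmetric] algebra_simps split_def)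
  finally show ?case .
qed

definition mm :: "(word \<Rightarrow> complex) \<Rightarrow> complex poly \<Rightarrow> nat \<Rightarrow> complex" where
  "mm T S j = lin T S [] (zs j)"

lemma IT_iff:
  assumes tr: "twisted_trace P t T"
  shows "S \<in> I_T T \<longleftrightarrow> (\<forall>j. mm T S j = 0)"
proof
  assume "S \<in> I_T T"
  then have "\<forall>b. fa_ev T (fa_mult (fa_poly S) b) = 0" by (simp add: I_T_def)
  then show "\<forall>j. mm T S j = 0"
    by (auto simp: mm_def lin_def fa_ev_mult fa_word_def dest: spec[of _ "fa_word (zs _)"])
next
  assume M: "\<forall>j. mm T S j = 0"
  have F: "is_functional P T" using tr by (simp add: twisted_trace_def)
  have L: "lin T S [] w = 0" for w
  proof (cases "wt w = 0")
    case False
    then show ?thesis unfolding lin_sum using wt_vanish[OF tr, of "[] @ zs _ @ w"] by simp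
  next
    case True
    obtain Q where Q: "jeq P (fa_word w) (fa_poly Q)" using wt0_poly[OF True] by blast
    have e: "T (zs i @ w) = (\<Sum>l\<le>degree Q. coeff Q l * T (zs i @ zs l))" for i
    proof -
      have "fa_ev T (wrap (zs i) [] (fa_word w)) = fa_ev T (wrap (zs i) [] (fa_poly Q))"
        by (rule jeq_ev[OF F jeq_wrap[OF Q]])
      then show ?thesis using lin_sum[of T Q "zs i" "[]"] by (simp add: lin_def)
    qed
    have "lin T S [] w = (\<Sum>i\<le>degree S. coeff S i * (\<Sum>l\<le>degree Q. coeff Q l * T (zs i @ zs l)))"
      unfolding lin_sum using e by simp
    also have "\<dots> = (\<Sum>l\<le>degree Q. coeff Q l * (\<Sum>i\<le>degree S. coeff S i * T (zs i @ zs l)))"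
      by (simp add: sum_distrib_left algebra_simps) (rule sum.swap)
    also have "\<dots> = (\<Sum>l\<le>degree Q. coeff Q l * mm T S l)"
      by (simp add: mm_def lin_sum)
    also have "\<dots> = 0" using M by simp
    finally show ?thesis .
  qed
  have "fa_ev T (fa_mult (fa_poly S) b) = 0" for b
    unfolding fa_ev_mult using L by (induct b) (auto simp: lin_def)
  then show "S \<in> I_T T" by (simp add: I_T_def)
qed



unbundle fps_syntax

lemma fls_nth_sum: "(\<Sum>i\<in>A. f i) $$ k = (\<Sum>i\<in>A. f i $$ k)"
  by (induct A rule: infinite_finite_induct) auto

lemma xpoly_sum: "xpoly R = (\<Sum>i\<le>degree R. fls_const (coeff R i) * fls_X_inv ^ i)"
proof -
  have d: "degree (map_poly fls_const R) = degree R" by (rule degree_map_poly) simp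
  show ?thesis unfolding xpoly_def poly_altdef d by (simp add: coeff_map_poly)
qed

lemma fls_X_inv_pow_nth: "((fls_X_inv :: complex fls) ^ i) $$ k = (if k + int i = 0 then 1 else 0)"
proof -
  have "(fls_X_inv :: complex fls) ^ i = fls_shift (int i) 1"
    using fls_X_inv_power_times_conv_shift(1)[of i "1 :: complex fls"] by simp
  then show ?thesis by simp
qed

lemma xpoly_mult_nth: "(xpoly S * G) $$ k = (\<Sum>i\<le>degree S. coeff S i * G $$ (k + int i))"
proof -
  have "xpoly S * G = (\<Sum>i\<le>degree S. fls_const (coeff S i) * (fls_X_inv ^ i * G))"
    unfolding xpoly_sum by (simp add: sum_distrib_right mult.assoc)
  then show ?thesis by (simp add: fls_nth_sum fls_X_inv_power_times_conv_shift)
qed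

lemma xpoly_nth: "xpoly R $$ k = (if k \<le> 0 then coeff R (nat (-k)) else 0)"
proof -
  have "xpoly R $$ k = (\<Sum>i\<le>degree R. coeff R i * (if k = - int i then 1 else 0))"
    unfolding xpoly_sum by (simp add: fls_nth_sum fls_X_inv_pow_nth)
  also have "\<dots> = (\<Sum>i\<le>degree R. if i = nat (-k) \<and> k \<le> 0 then coeff R i else 0)"
    by (rule sum.cong) auto
  also have "\<dots> = (if k \<le> 0 then coeff R (nat (-k)) else 0)"
    by (auto simp: sum.delta' coeff_eq_0 not_le)
  finally show ?thesis .
qed

lemma xpoly_inj: "xpoly A = xpoly B \<Longrightarrow> A = B"
proof (rule poly_eqI)
  fix n assume "xpoly A = xpoly B"
  then have "xpoly A $$ (- int n) = xpoly B $$ (- int n)" by simp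
  then show "coeff A n = coeff B n" by (simp add: xpoly_nth)
qed

lemma xpoly_0[simp]: "xpoly 0 = 0" by (simp add: xpoly_def)

lemma xpoly_eq_0_iff[simp]: "xpoly A = 0 \<longleftrightarrow> A = 0"
  using xpoly_inj[of A 0] by auto

lemma xpoly_add: "xpoly (A + B) = xpoly A + xpoly B"
  by (simp add: fls_eq_iff xpoly_nth)

lemma xpoly_smult: "xpoly (smult a B) = fls_const a * xpoly B"
  by (simp add: fls_eq_iff xpoly_nth)

lemma xpoly_pCons: "xpoly (pCons a A) = fls_const a + fls_X_inv * xpoly A"
proof -
  have s: "fls_X_inv * f = fls_shift 1 f" for f :: "complex fls"
    using fls_X_inv_power_times_conv_shift(1)[of 1 f] by simp
  show ?thesis
  proof (subst fls_eq_iff, intro allI)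
    fix k :: int
    show "xpoly (pCons a A) $$ k = (fls_const a + fls_X_inv * xpoly A) $$ k"
    proof (cases "k < 0")
      case True
      then have "nat (-k) = Suc (nat (-k-1))" by simp
      then show ?thesis using True by (simp add: xpoly_nth s)
    next
      case False then show ?thesis by (simp add: xpoly_nth s)
    qed
  qed
qed

lemma xpoly_mult: "xpoly (A * B) = xpoly A * xpoly B"
proof (induct A)
  case 0 then show ?case by simp
next
  case (pCons a A)
  have "xpoly (pCons a A * B) = xpoly (smult a B + pCons 0 (A * B))" by simp
  also have "\<dots> = fls_const a * xpoly B + fls_X_inv * (xpoly A * xpoly B)"
    by (simp add: xpoly_add xpoly_smult xpoly_pCons pCons(2))
  also have "\<dots> = xpoly (pCons a A) * xpoly B"
    by (simp add: xpoly_pCons algebra_simps)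
  finally show ?case .
qed

lemma stieltjes_nth: "stieltjes T $$ k = (if k \<ge> 1 then T (zs (nat (k - 1))) else 0)"
  by (simp add: stieltjes_def fls_X_times_conv_shift)

lemma mm_nth: "mm T S j = (xpoly S * stieltjes T) $$ (int j + 1)"
proof -
  have "mm T S j = (\<Sum>i\<le>degree S. coeff S i * T (zs i @ zs j))"
    by (simp add: mm_def lin_sum)
  also have "\<dots> = (\<Sum>i\<le>degree S. coeff S i * stieltjes T $$ (int j + 1 + int i))"
    by (rule sum.cong) (auto simp: stieltjes_nth replicate_add[symmetric] nat_add_distrib add.commute)
  finally show ?thesis by (simp add: xpoly_mult_nth)
qed

lemma fls_part: "(\<exists>R. xpoly S * stieltjes T = xpoly R) \<longleftrightarrow> (\<forall>j. mm T S j = 0)"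
proof
  assume "\<exists>R. xpoly S * stieltjes T = xpoly R"
  then obtain R where R: "xpoly S * stieltjes T = xpoly R" by blast
  show "\<forall>j. mm T S j = 0" unfolding mm_nth R by (simp add: xpoly_nth)
next
  assume M: "\<forall>j. mm T S j = 0"
  define G where "G = xpoly S * stieltjes T"
  define R where "R = (\<Sum>i\<le>degree S. monom (G $$ (- int i)) i)"
  have cR: "coeff R n = (if n \<le> degree S then G $$ (- int n) else 0)" for n
    by (simp add: R_def coeff_sum coeff_monom sum.delta)
  have "G = xpoly R"
  proof (subst fls_eq_iff, intro allI)
    fix k :: int
    show "G $$ k = xpoly R $$ k"
    proof (cases "k > 0")
      case True
      then have "k = int (nat (k - 1)) + 1" by simp
      then have "G $$ k = mm T S (nat (k-1))" unfolding G_def mm_nth by metis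
      then show ?thesis using M True by (simp add: xpoly_nth)
    next
      case False
      show ?thesis
      proof (cases "nat (-k) \<le> degree S")
        case True
        then show ?thesis using False by (simp add: xpoly_nth cR)
      next
        case c: False
        have "G $$ k = (\<Sum>i\<le>degree S. coeff S i * stieltjes T $$ (k + int i))"
          unfolding G_def by (rule xpoly_mult_nth)
        also have "\<dots> = 0" using c False by (intro sum.neutral) (auto simp: stieltjes_nth)
        finally show ?thesis using False c by (simp add: xpoly_nth cR)
      qed
    qed
  qed
  then show "\<exists>R. xpoly S * stieltjes T = xpoly R" unfolding G_def by blast
qed




definition gen_act :: "complex poly \<Rightarrow> complex \<Rightarrow> gen \<Rightarrow> (int \<Rightarrow> complex) \<Rightarrow> (int \<Rightarrow> complex)" where
  "gen_act P l g f = (case g of U \<Rightarrow> (\<lambda>n. f (n - 1))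
      | V \<Rightarrow> (\<lambda>n. poly P (l + of_int n + 1/2) * f (n + 1))
      | Z \<Rightarrow> (\<lambda>n. (l + of_int n) * f n))"

fun act :: "complex poly \<Rightarrow> complex \<Rightarrow> word \<Rightarrow> (int \<Rightarrow> complex) \<Rightarrow> (int \<Rightarrow> complex)" where
  "act P l [] f = f"
| "act P l (g # w) f = gen_act P l g (act P l w f)"

definition dl :: "int \<Rightarrow> int \<Rightarrow> complex" where "dl m n = (if n = m then 1 else 0)"

definition Trep :: "complex poly \<Rightarrow> complex \<Rightarrow> word \<Rightarrow> complex" where
  "Trep P l w = act P l w (dl 0) 0"

lemma act_append: "act P l (x @ y) f = act P l x (act P l y f)"
  by (induct x) auto

lemma act_zero: "act P l x (\<lambda>n. 0) = (\<lambda>n. 0)"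
  by (induct x) (auto simp: gen_act_def split: gen.splits)

lemma act_add: "act P l x (\<lambda>n. f n + h n) = (\<lambda>n. act P l x f n + act P l x h n)"
  by (induct x) (auto simp: gen_act_def algebra_simps split: gen.splits)

lemma act_scale: "act P l x (\<lambda>n. c * f n) = (\<lambda>n. c * act P l x f n)"
  by (induct x) (auto simp: gen_act_def algebra_simps split: gen.splits)

lemma act_suml: "(\<Sum>(c,w)\<leftarrow>r. c * act P l x (F w) n) = act P l x (\<lambda>m. \<Sum>(c,w)\<leftarrow>r. c * F w m) n"
proof (induct r arbitrary: n)
  case Nil then show ?case using act_zero[of P l x] by (simp add: fun_eq_iff)
next
  case (Cons a r)
  obtain c w where a: "a = (c,w)" by force
  show ?case unfolding a using Cons
    by (simp add: act_add[of P l x "\<lambda>m. c * F w m" "\<lambda>m. \<Sum>(c,w)\<leftarrow>r. c * F w m"] act_scale)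
qed

lemma act_zs: "act P l (zs i) g m = (l + of_int m) ^ i * g m"
  by (induct i) (auto simp: gen_act_def)

lemma sum_fa_poly: "(\<Sum>(c,w)\<leftarrow>fa_poly Q. c * act P l w g m) = poly Q (l + of_int m) * g m"
proof -
  have "(\<Sum>(c,w)\<leftarrow>fa_poly Q. c * act P l w g m) = sum_list (map (\<lambda>i. coeff Q i * ((l + of_int m) ^ i * g m)) [0..<Suc (degree Q)])"
    by (simp add: fa_poly_def o_def act_zs del: upt_Suc)
  also have "\<dots> = (\<Sum>i\<le>degree Q. coeff Q i * (l + of_int m) ^ i) * g m"
    by (simp add: interv_sum_list_conv_sum_set_nat atLeast0LessThan lessThan_Suc_atMost sum_distrib_right
        mult.assoc del: upt_Suc)
  finally show ?thesis by (simp add: poly_altdef)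
qed

lemma sum_smult: "(\<Sum>(c,w)\<leftarrow>fa_smult d A. c * F w) = d * (\<Sum>(c,w)\<leftarrow>A. c * F w)"
  by (induct A) (auto simp: algebra_simps)

lemma rels_zero: "r \<in> set (rels P) \<Longrightarrow> (\<lambda>m. \<Sum>(c,w)\<leftarrow>r. c * act P l w g m) = (\<lambda>m. 0)"
  by (auto simp: rels_def gen_act_def sum_fa_poly sum_smult poly_pcompose algebra_simps fun_eq_iff)

lemma Trep_functional: "is_functional P (Trep P l)"
  unfolding is_functional_def
proof (intro allI ballI)
  fix x y r assume r: "r \<in> set (rels P)"
  have "fa_ev (Trep P l) (fa_mult (fa_mult (fa_word x) r) (fa_word y)) = fa_ev (\<lambda>w. Trep P l (x@w@y)) r"
    by (simp add: fa_mult_words fa_ev_wrap)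
  also have "\<dots> = (\<Sum>(c,w)\<leftarrow>r. c * act P l x (act P l w (act P l y (dl 0))) 0)"
    by (simp add: Trep_def act_append fa_ev_def)
  also have "\<dots> = act P l x (\<lambda>m. \<Sum>(c,w)\<leftarrow>r. c * act P l w (act P l y (dl 0)) m) 0"
    by (rule act_suml)
  also have "\<dots> = 0" unfolding rels_zero[OF r] act_zero by simp
  finally show "fa_ev (Trep P l) (fa_mult (fa_mult (fa_word x) r) (fa_word y)) = 0" .
qed

lemma Trep_poly: "fa_ev (Trep P l) (fa_poly S) = poly S l"
proof -
  have "fa_ev (Trep P l) (fa_poly S) = lin (Trep P l) S [] []" by (simp add: lin_def)
  also have "\<dots> = poly S l" by (simp add: lin_sum Trep_def act_zs dl_def poly_altdef)
  finally show ?thesis .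
qed

lemma poly_notin_J: "S \<noteq> 0 \<Longrightarrow> \<not> in_J P (fa_poly S)"
proof
  assume "S \<noteq> 0" "in_J P (fa_poly S)"
  obtain l where "poly S l \<noteq> 0" using \<open>S \<noteq> 0\<close> poly_all_0_iff_0 by blast
  moreover have "fa_ev (Trep P l) (fa_poly S) = 0" by (rule in_J_ev[OF Trep_functional \<open>in_J P (fa_poly S)\<close>])
  ultimately show False by (simp add: Trep_poly)
qed

lemma act_repU: "act P l (replicate k U) (\<lambda>n. c * dl b n) = (\<lambda>n. c * dl (b + int k) n)"
  by (induct k) (auto simp: gen_act_def dl_def fun_eq_iff algebra_simps)

lemma act_repV: "act P l (replicate k V) (dl a) = (\<lambda>n. (\<Prod>m<k. poly P (l + of_int a - of_nat m - 1/2)) * dl (a - int k) n)"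
  by (induct k) (auto simp: gen_act_def dl_def fun_eq_iff algebra_simps)

lemma Trep_UV: "Trep P l (replicate k U @ replicate k V) = (\<Prod>m<k. poly P (l - of_nat m - 1/2))"
  unfolding Trep_def act_append act_repV using act_repU[of P l k "\<Prod>m<k. poly P (l - of_nat m - 1/2)" "- int k"]
  by (simp add: dl_def)

lemma act_repU1: "act P l (replicate k U) (dl b) = dl (b + int k)"
  using act_repU[of P l k 1 b] by simp

lemma Trep_VU: "Trep P l (replicate k V @ replicate k U) = (\<Prod>m<k. poly P (l + of_nat k - of_nat m - 1/2))"
  unfolding Trep_def act_append act_repU1 act_repV by (simp add: dl_def)

lemma prod_poly_nonzero:
  fixes P :: "complex poly" and a :: "nat \<Rightarrow> complex"
  assumes P: "degree P \<ge> 1"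
  shows "\<exists>l. (\<Prod>m<k. poly P (l + a m)) \<noteq> 0"
proof -
  let ?Q = "\<Prod>m<k. pcompose P [:a m, 1:]"
  have "P \<noteq> 0" using P by auto
  then have "?Q \<noteq> 0"
    by (auto simp: prod_zero_iff dest: pcompose_eq_0)
  then obtain l where "poly ?Q l \<noteq> 0" using poly_all_0_iff_0 by blast
  then show ?thesis by (auto simp: poly_prod poly_pcompose algebra_simps)
qed

lemma UV_nonzero: "degree P \<ge> 1 \<Longrightarrow> \<exists>l. Trep P l (replicate k U @ replicate k V) \<noteq> 0"
  unfolding Trep_UV using prod_poly_nonzero[where P=P and k=k and a="\<lambda>m. - of_nat m - 1/2"] by (simp add: algebra_simps)

lemma VU_nonzero: "degree P \<ge> 1 \<Longrightarrow> \<exists>l. Trep P l (replicate k V @ replicate k U) \<noteq> 0"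
  unfolding Trep_VU using prod_poly_nonzero[where P=P and k=k and a="\<lambda>m. of_nat k - of_nat m - 1/2"] by (simp add: algebra_simps)




lemma fa_poly_add_coeff: "fa_coeff (fa_poly (A + B)) w = fa_coeff (fa_poly A @ fa_poly B) w"
  by (simp add: fa_coeff_fa_poly coeff_add)

lemma fa_poly_smult_coeff: "fa_coeff (fa_poly (smult c A)) w = fa_coeff (fa_smult c (fa_poly A)) w"
  by (simp add: fa_coeff_fa_poly)

lemma zs_prefix_iff: "(\<exists>v. w = zs i @ v \<and> v = zs (length v)) \<longleftrightarrow> (w = zs (length w) \<and> i \<le> length w)"
proof
  assume "\<exists>v. w = zs i @ v \<and> v = zs (length v)"
  then obtain v where "w = zs i @ v" "v = zs (length v)" by blast
  then show "w = zs (length w) \<and> i \<le> length w" by (metis length_append length_replicate replicate_add le_add1)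
next
  assume "w = zs (length w) \<and> i \<le> length w"
  then have "w = zs i @ zs (length w - i)" by (metis le_add_diff_inverse replicate_add)
  then show "\<exists>v. w = zs i @ v \<and> v = zs (length v)" by (intro exI[of _ "zs (length w - i)"]) simp
qed

lemma fa_poly_shift_coeff: "fa_coeff (fa_poly (monom 1 i * A)) w = fa_coeff (wrap (zs i) [] (fa_poly A)) w"
proof (cases "\<exists>v. w = zs i @ v")
  case True
  then obtain v where v: "w = zs i @ v" by blast
  have "fa_coeff (wrap (zs i) [] (fa_poly A)) w = fa_coeff (fa_poly A) v"
    using v by (simp add: fa_coeff_wrap)
  also have "\<dots> = fa_coeff (fa_poly (monom 1 i * A)) w"
    using zs_prefix_iff[of w i] v by (auto simp: fa_coeff_fa_poly coeff_monom_mult)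
  finally show ?thesis ..
next
  case False
  then have "\<not> (w = zs (length w) \<and> i \<le> length w)" using zs_prefix_iff[of w i] by blast
  then show ?thesis using False by (auto simp: fa_coeff_wrap fa_coeff_fa_poly coeff_monom_mult)
qed

lemma lin_add: "lin T (A + B) x y = lin T A x y + lin T B x y"
proof -
  have "lin T (A + B) x y = fa_ev T (wrap x y (fa_poly A @ fa_poly B))"
    unfolding lin_def by (intro fa_ev_cong fa_coeff_wrap_cong fa_poly_add_coeff)
  then show ?thesis by (simp add: lin_def)
qed

lemma lin_smult: "lin T (smult c A) x y = c * lin T A x y"
proof -
  have "lin T (smult c A) x y = fa_ev T (wrap x y (fa_smult c (fa_poly A)))"
    unfolding lin_def by (intro fa_ev_cong fa_coeff_wrap_cong fa_poly_smult_coeff)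
  then show ?thesis by (simp add: lin_def)
qed

lemma lin_shift: "lin T (monom 1 i * A) x y = lin T A (x @ zs i) y"
proof -
  have "lin T (monom 1 i * A) x y = fa_ev T (wrap x y (wrap (zs i) [] (fa_poly A)))"
    unfolding lin_def by (intro fa_ev_cong fa_coeff_wrap_cong fa_poly_shift_coeff)
  then show ?thesis by (simp add: lin_def)
qed

lemma lin_zero: "lin T 0 x y = 0" by (simp add: lin_sum)

lemma lin_sumI: "lin T (\<Sum>i\<in>I. f i) x y = (\<Sum>i\<in>I. lin T (f i) x y)"
  by (induct I rule: infinite_finite_induct) (auto simp: lin_zero lin_add)

lemma fa_mult_word_right: "fa_mult A (fa_word y) = wrap [] y A"
  by (induct A) (auto simp: fa_mult_def fa_word_def)

lemma fa_coeff_notin: "w \<notin> snd ` set B \<Longrightarrow> fa_coeff B w = 0"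
  by (induct B) (auto simp: fa_coeff_def)

lemma NF_wt:
  assumes "NF w" "(c = U \<and> d = V) \<or> (c = V \<and> d = U)" "wt w = wt (replicate k c)"
  shows "\<exists>i. w = zs i @ replicate k c"
  using assms unfolding NF_def by auto

lemma key:
  assumes tr: "twisted_trace P t T" and degP: "degree P \<ge> 1"
    and aB: "jeq P a B" and Bg: "\<forall>q\<in>set B. NF (snd q)"
    and ann: "\<forall>b. fa_ev T (fa_mult a b) = 0"
    and Inull: "\<forall>S\<in>I_T T. S = 0"
    and cd: "(c = U \<and> d = V) \<or> (c = V \<and> d = U)"
    and nz: "\<exists>l. Trep P l (replicate k c @ replicate k d) \<noteq> 0"
  shows "fa_coeff B (zs i0 @ replicate k c) = 0"
proof -
  have F: "is_functional P T" using tr by (simp add: twisted_trace_def)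
  define W where "W = snd ` set B"
  have finW: "finite W" by (simp add: W_def)
  define e where "e = wt (replicate k c)"
  have wd: "wt (replicate k d) = - e" using cd by (auto simp: e_def)
  define I where "I = {i. zs i @ replicate k c \<in> W}"
  have injI: "inj (\<lambda>i. zs i @ replicate k c)" by (rule injI) (metis append_same_eq length_replicate)
  have finI: "finite I" unfolding I_def
    by (rule finite_vimageI[of W "\<lambda>i. zs i @ replicate k c", unfolded vimage_def]) (use finW injI in auto)
  have We: "{w\<in>W. wt w = e} = (\<lambda>i. zs i @ replicate k c) ` I"
  proof
    show "{w \<in> W. wt w = e} \<subseteq> (\<lambda>i. zs i @ replicate k c) ` I"
    proof
      fix w assume w: "w \<in> {w \<in> W. wt w = e}"
      then have "NF w" using Bg by (auto simp: W_def)
      then obtain i where "w = zs i @ replicate k c" using NF_wt[OF _ cd] w e_def by blast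
      then show "w \<in> (\<lambda>i. zs i @ replicate k c) ` I" using w by (auto simp: I_def)
    qed
  next
    show "(\<lambda>i. zs i @ replicate k c) ` I \<subseteq> {w \<in> W. wt w = e}" by (auto simp: I_def e_def)
  qed
  have wt0: "wt (replicate k c @ replicate k d) = 0" using wd by (simp add: e_def)
  obtain Phi where Phi: "jeq P (fa_word (replicate k c @ replicate k d)) (fa_poly Phi)"
    using wt0_poly[OF wt0] by blast
  have Phinz: "Phi \<noteq> 0"
  proof
    assume "Phi = 0"
    obtain l where l: "Trep P l (replicate k c @ replicate k d) \<noteq> 0" using nz by blast
    have "fa_ev (Trep P l) (fa_word (replicate k c @ replicate k d)) = fa_ev (Trep P l) (fa_poly Phi)"
      by (rule jeq_ev[OF Trep_functional Phi])
    then show False using l \<open>Phi = 0\<close> by (simp add: Trep_poly)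
  qed
  define q where "q i = fa_coeff B (zs i @ replicate k c)" for i
  define S where "S = (\<Sum>i\<in>I. smult (q i) (monom 1 i * Phi))"
  have Tval: "T (zs i @ replicate k c @ replicate k d @ zs j) = lin T Phi (zs i) (zs j)" for i j
  proof -
    have "fa_ev T (wrap (zs i) (zs j) (fa_word (replicate k c @ replicate k d))) = fa_ev T (wrap (zs i) (zs j) (fa_poly Phi))"
      by (rule jeq_ev[OF F jeq_wrap[OF Phi]])
    then show ?thesis by (simp add: lin_def)
  qed
  have "mm T S j = 0" for j
  proof -
    let ?b = "replicate k d @ zs j"
    have "mm T S j = (\<Sum>i\<in>I. q i * lin T Phi (zs i) (zs j))"
      by (simp add: S_def mm_def lin_sumI lin_smult lin_shift)
    also have "\<dots> = (\<Sum>i\<in>I. q i * T (zs i @ replicate k c @ ?b))"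
      using Tval by simp
    also have "\<dots> = (\<Sum>w\<in>(\<lambda>i. zs i @ replicate k c) ` I. fa_coeff B w * T (w @ ?b))"
      by (subst sum.reindex) (use injI in \<open>auto simp: q_def inj_on_def\<close>)
    also have "\<dots> = (\<Sum>w\<in>W. fa_coeff B w * T (w @ ?b))"
    proof (rule sum.mono_neutral_left[OF finW])
      show "(\<lambda>i. zs i @ replicate k c) ` I \<subseteq> W" by (auto simp: I_def)
      show "\<forall>w\<in>W - (\<lambda>i. zs i @ replicate k c) ` I. fa_coeff B w * T (w @ ?b) = 0"
      proof
        fix w assume "w \<in> W - (\<lambda>i. zs i @ replicate k c) ` I"
        then have "wt w \<noteq> e" using We by auto
        then have "wt (w @ ?b) \<noteq> 0" using wd by simp
        then show "fa_coeff B w * T (w @ ?b) = 0" using wt_vanish[OF tr] by simp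
      qed
    qed
    also have "\<dots> = fa_ev (\<lambda>w. T (w @ ?b)) B"
      by (rule fa_ev_coeff[symmetric]) (auto simp: W_def finW)
    also have "\<dots> = fa_ev T (wrap [] ?b B)" by (simp add: fa_ev_wrap)
    also have "\<dots> = fa_ev T (wrap [] ?b a)" by (rule jeq_ev[OF F jeq_wrap[OF aB], symmetric])
    also have "\<dots> = fa_ev T (fa_mult a (fa_word ?b))" by (simp add: fa_mult_word_right)
    also have "\<dots> = 0" using ann by blast
    finally show ?thesis .
  qed
  then have "S \<in> I_T T" using IT_iff[OF tr] by blast
  then have S0: "S = 0" using Inull by blast
  have "S = (\<Sum>i\<in>I. monom (q i) i) * Phi"
    by (simp add: S_def sum_distrib_right smult_monom mult_smult_left[symmetric])
  then have "(\<Sum>i\<in>I. monom (q i) i) = 0" using S0 Phinz by simp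
  then have "coeff (\<Sum>i\<in>I. monom (q i) i) i0 = 0" by simp
  then have "(if i0 \<in> I then q i0 else 0) = 0"
    by (simp add: coeff_sum coeff_monom sum.delta' finI)
  then show ?thesis
    by (cases "i0 \<in> I") (auto simp: q_def I_def W_def intro!: fa_coeff_notin)
qed

lemma degen_imp:
  assumes tr: "twisted_trace P t T" and degP: "degree P \<ge> 1"
    and na: "\<not> in_J P a" and ann: "\<forall>b. fa_ev T (fa_mult a b) = 0"
  shows "\<exists>S. S \<noteq> 0 \<and> S \<in> I_T T"
proof (rule ccontr)
  assume "\<not> (\<exists>S. S \<noteq> 0 \<and> S \<in> I_T T)"
  then have Inull: "\<forall>S\<in>I_T T. S = 0" by blast
  have "\<exists>B. jeq P a B \<and> (\<forall>q\<in>set B. NF (snd q))"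
  proof (rule combine, intro ballI)
    fix p assume "p \<in> set a"
    obtain B where "jeq P (fa_word (snd p)) B" "good (wt (snd p)) B" using NF_thm by blast
    then show "\<exists>B. jeq P (fa_word (snd p)) B \<and> (\<forall>q\<in>set B. NF (snd q))" by (auto simp: good_def)
  qed
  then obtain B where aB: "jeq P a B" and Bg: "\<forall>q\<in>set B. NF (snd q)" by blast
  have "fa_coeff B w = 0" for w
  proof (cases "w \<in> snd ` set B")
    case False then show ?thesis by (rule fa_coeff_notin)
  next
    case True
    then have "NF w" using Bg by auto
    then show ?thesis unfolding NF_def
    proof (elim disjE exE)
      fix i k assume w: "w = zs i @ replicate k U"
      show ?thesis unfolding w
        by (rule key[OF tr degP aB Bg ann Inull, of U V]) (use UV_nonzero[OF degP] in auto)
    next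
      fix i k assume w: "w = zs i @ replicate k V"
      show ?thesis unfolding w
        by (rule key[OF tr degP aB Bg ann Inull, of V U]) (use VU_nonzero[OF degP] in auto)
    qed
  qed
  then have "in_J P B" by (intro in_J_cong[OF in_J_Nil]) simp
  then have "in_J P a" by (rule jeq_in_J[OF aB])
  then show False using na by blast
qed


lemma cop_dvd:
  fixes S R Q :: "complex poly"
  shows "coprime S R \<Longrightarrow> S dvd Q * R \<Longrightarrow> S dvd Q"
  using coprime_dvd_mult_left_iff[of S R Q] by simp

theorem theorem3p2:
  fixes P :: "complex poly" and t :: complex and T :: "word \<Rightarrow> complex"
  assumes "degree P \<ge> 1" and "lead_coeff P = 1" and "t \<noteq> 0"
    and "twisted_trace P t T"
  shows "I_T T = {S. \<exists>R. xpoly S * stieltjes T = xpoly R} \<and>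
    (degenerate P T \<longleftrightarrow> (\<exists>R S. S \<noteq> 0 \<and> stieltjes T = xpoly R / xpoly S)) \<and>
    (\<forall>R S. lead_coeff S = 1 \<and> coprime R S \<and> stieltjes T = xpoly R / xpoly S
            \<longrightarrow> I_T T = {Q. S dvd Q})"
proof -
  note tr = assms(4) and degP = assms(1)
  have P1: "I_T T = {S. \<exists>R. xpoly S * stieltjes T = xpoly R}"
    using IT_iff[OF tr] fls_part by blast
  have P2: "degenerate P T \<longleftrightarrow> (\<exists>R S. S \<noteq> 0 \<and> stieltjes T = xpoly R / xpoly S)"
  proof
    assume "degenerate P T"
    then obtain a where a: "\<not> in_J P a" "\<forall>b. fa_ev T (fa_mult a b) = 0"
      unfolding degenerate_def by blast
    obtain S where S: "S \<noteq> 0" "S \<in> I_T T" using degen_imp[OF tr degP a] by blast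
    then obtain R where R: "xpoly S * stieltjes T = xpoly R" using P1 by blast
    have "xpoly S \<noteq> 0" using S by simp
    then have "stieltjes T = xpoly R / xpoly S" using R
      by (metis nonzero_mult_div_cancel_left)
    then show "\<exists>R S. S \<noteq> 0 \<and> stieltjes T = xpoly R / xpoly S" using S by blast
  next
    assume "\<exists>R S. S \<noteq> 0 \<and> stieltjes T = xpoly R / xpoly S"
    then obtain R S where S: "S \<noteq> 0" "stieltjes T = xpoly R / xpoly S" by blast
    have "xpoly S \<noteq> 0" using S by simp
    then have "xpoly S * stieltjes T = xpoly R" using S by simp
    then have "S \<in> I_T T" using P1 by blast
    then have "\<forall>b. fa_ev T (fa_mult (fa_poly S) b) = 0" by (simp add: I_T_def)
    then show "degenerate P T" unfolding degenerate_def using poly_notin_J[OF S(1)] by blast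
  qed
  have P3: "\<forall>R S. lead_coeff S = 1 \<and> coprime R S \<and> stieltjes T = xpoly R / xpoly S
            \<longrightarrow> I_T T = {Q. S dvd Q}"
  proof (intro allI impI)
    fix R S assume H: "lead_coeff S = 1 \<and> coprime R S \<and> stieltjes T = xpoly R / xpoly S"
    have S0: "S \<noteq> 0" using H by auto
    then have xS: "xpoly S \<noteq> 0" by simp
    have FS: "stieltjes T * xpoly S = xpoly R" using H xS by simp
    have cop: "coprime S R" using H by (simp add: coprime_commute)
    show "I_T T = {Q. S dvd Q}"
    proof (unfold P1, intro equalityI subsetI)
      fix Q assume "Q \<in> {S. \<exists>R. xpoly S * stieltjes T = xpoly R}"
      then obtain R' where R': "xpoly Q * stieltjes T = xpoly R'" by blast
      have "xpoly (Q * R) = xpoly Q * (stieltjes T * xpoly S)" using FS by (simp add: xpoly_mult)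
      also have "\<dots> = xpoly (R' * S)" using R' by (simp add: xpoly_mult mult.assoc[symmetric])
      finally have "Q * R = R' * S" by (rule xpoly_inj)
      then have "S dvd Q * R" by (metis dvd_triv_right)
      then have "S dvd Q" using cop_dvd[OF cop] by blast
      then show "Q \<in> {Q. S dvd Q}" by simp
    next
      fix Q assume "Q \<in> {Q. S dvd Q}"
      then obtain K where K: "Q = S * K" by (auto elim: dvdE)
      have "xpoly Q * stieltjes T = xpoly K * (stieltjes T * xpoly S)"
        by (simp add: K xpoly_mult algebra_simps)
      also have "\<dots> = xpoly (K * R)" using FS by (simp add: xpoly_mult)
      finally show "Q \<in> {S. \<exists>R. xpoly S * stieltjes T = xpoly R}" by blast
    qed
  qed
  show ?thesis using P1 P2 P3 by blast
qed

end
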